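(* Let $p\ge 2$ be an integer and let $C_p(n)=\frac{(pn)!}{((p-1)n+1)!\,n!}=\frac{1}{(p-1)n+1}\binom{pn}{n}$ be the Fuss–Catalan numbers. Then the sequence $\{C_p(n)\}_{n\geq0}$ is infinitely log-monotonic.
   Context: For a sequence $\{z_n\}$ of positive numbers, define the operator $R\{z_n\}=\{z_{n+1}/z_n\}$. A sequence of positive numbers $\{x_n\}$ is log-convex if $x_{n-1}x_{n+1}\ge x_n^2$ and log-concave if $x_{n-1}x_{n+1}\le x_n^2$, for all indices where these terms are defined. A sequence $\{z_n\}$ is log-monotonic of order $k$ if for every odd $r\le k-1$ the sequence $R^r\{z_n\}$ is log-concave and for every even $r\le k-1$ (including $r=0$) the sequence $R^r\{z_n\}$ is log-convex. It is infinitely log-monotonic if it is log-monotonic of order $k$ for every integer $k\ge0$. *)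

theory Defs
  imports Complex_Main
begin

definition ratio_op :: "(nat \<Rightarrow> real) \<Rightarrow> (nat \<Rightarrow> real)" ("R") where
  "ratio_op z = (\<lambda>n. z (Suc n) / z n)"

definition log_convex :: "(nat \<Rightarrow> real) \<Rightarrow> bool" where
  "log_convex x \<longleftrightarrow> (\<forall>n\<ge>1. x (n - 1) * x (n + 1) \<ge> (x n)^2)"

definition log_concave :: "(nat \<Rightarrow> real) \<Rightarrow> bool" where
  "log_concave x \<longleftrightarrow> (\<forall>n\<ge>1. x (n - 1) * x (n + 1) \<le> (x n)^2)"

definition log_monotonic_order :: "nat \<Rightarrow> (nat \<Rightarrow> real) \<Rightarrow> bool" where
  "log_monotonic_order k z \<longleftrightarrow>
     (\<forall>r. r + 1 \<le> k \<longrightarrow>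
        (odd r \<longrightarrow> log_concave ((ratio_op ^^ r) z)) \<and>
        (even r \<longrightarrow> log_convex ((ratio_op ^^ r) z)))"

definition infinitely_log_monotonic :: "(nat \<Rightarrow> real) \<Rightarrow> bool" where
  "infinitely_log_monotonic z \<longleftrightarrow> (\<forall>k. log_monotonic_order k z)"

definition fuss_catalan :: "nat \<Rightarrow> nat \<Rightarrow> real" where
  "fuss_catalan p n = real (fact (p * n)) / (real (fact ((p - 1) * n + 1)) * real (fact n))"

end

theory Submission imports Defs begin

definition dlt :: "(real \<Rightarrow> real) \<Rightarrow> real \<Rightarrow> real" where
  "dlt f x = f (x + 1) - f x"

lemma dlt_Suc: "(dlt^^Suc m) g x = (dlt^^m) g (x+1) - (dlt^^m) g x"
  by (simp add: dlt_def)

lemma dlt_inv: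
  "\<And>x. x > 0 \<Longrightarrow> (dlt^^m) inverse x = (-1)^m * fact m / (\<Prod>i<Suc m. (x + real i))"
proof (induction m)
  case 0 then show ?case by (simp add: divide_inverse)
next
  case (Suc m)
  have pos: "\<And>y. y > 0 \<Longrightarrow> (\<Prod>i<Suc m. (y + real i)) > 0"
    by (intro prod_pos) auto
  have e1: "(\<Prod>i<Suc (Suc m). (x + real i)) = x * (\<Prod>i<Suc m. (x + 1 + real i))"
    by (subst prod.lessThan_Suc_shift) (simp add: add.assoc)
  have e2: "(\<Prod>i<Suc (Suc m). (x + real i)) = (\<Prod>i<Suc m. (x + real i)) * (x + real (Suc m))"
    by (simp)
  have p1: "(\<Prod>i<Suc m. (x + 1 + real i)) > 0" using pos[of "x+1"] Suc.prems by simp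
  have p2: "(\<Prod>i<Suc m. (x + real i)) > 0" using pos[of "x"] Suc.prems by simp
  have "(dlt^^Suc m) inverse x = (-1)^m * fact m / (\<Prod>i<Suc m. (x + 1 + real i))
       - (-1)^m * fact m / (\<Prod>i<Suc m. (x + real i))"
    using Suc.IH[of "x+1"] Suc.IH[of x] Suc.prems by (simp only: dlt_Suc)
  also have "\<dots> = (-1)^m * fact m * x / (\<Prod>i<Suc (Suc m). (x + real i))
       - (-1)^m * fact m * (x + real (Suc m)) / (\<Prod>i<Suc (Suc m). (x + real i))"
  proof -
    have g: "\<And>A B P c. P = x * A \<Longrightarrow> P = B * (x + real (Suc m)) \<Longrightarrow> A > 0 \<Longrightarrow> B > 0
       \<Longrightarrow> c / A - c / B = c * x / P - c * (x + real (Suc m)) / P"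
    proof -
      fix A B P c :: real assume h: "P = x * A" "P = B * (x + real (Suc m))" "A > 0" "B > 0"
      have "c / A = c * x / P" using h Suc.prems by simp
      moreover have "c / B = c * (x + real (Suc m)) / P"
        using h Suc.prems by (metis mult.commute mult_divide_mult_cancel_left_if order_less_irrefl add_pos_pos of_nat_0_le_iff le_add_same_cancel1 less_le_trans)
      ultimately show "c / A - c / B = c * x / P - c * (x + real (Suc m)) / P" by simp
    qed
    show ?thesis by (rule g[OF e1 e2 p1 p2])
  qed
  also have "\<dots> = (-1)^Suc m * fact (Suc m) / (\<Prod>i<Suc (Suc m). (x + real i))"
    by (simp add: diff_divide_distrib[symmetric] algebra_simps)
  finally show ?case .
qed

lemma dlt_deriv:
  assumes "\<And>x. x > 0 \<Longrightarrow> (f has_real_derivative f' x) (at x)"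
  shows "x > 0 \<Longrightarrow> ((dlt^^m) f has_real_derivative (dlt^^m) f' x) (at x)"
proof (induction m arbitrary: x)
  case 0 then show ?case using assms by simp
next
  case (Suc m)
  have a: "((\<lambda>y. (dlt^^m) f (y + 1)) has_real_derivative (dlt^^m) f' (x+1)) (at x)"
    using Suc.IH[of "x+1"] Suc.prems by (simp add: DERIV_shift)
  have "((\<lambda>y. (dlt^^m) f (y + 1) - (dlt^^m) f y) has_real_derivative
         (dlt^^m) f' (x+1) - (dlt^^m) f' x) (at x)"
    by (intro DERIV_diff a Suc.IH Suc.prems)
  then show ?case by (simp only: dlt_Suc)
qed

definition H :: "nat \<Rightarrow> real \<Rightarrow> real" where "H m = (dlt^^m) ln"

lemma S_antimono:
  assumes "0 < a" "a \<le> b"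
  shows "(-1)^(m+1) * H m b \<le> (-1)^(m+1) * H m a"
proof -
  have d: "\<And>x. x > 0 \<Longrightarrow> ((\<lambda>y. (-1)^(m+1) * H m y) has_real_derivative
      (-1)^(m+1) * ((-1)^m * fact m / (\<Prod>i<Suc m. (x + real i)))) (at x)"
    unfolding H_def
    by (intro DERIV_cmult, subst dlt_inv[symmetric], assumption, rule dlt_deriv[OF DERIV_ln])
  have "\<And>x. x > 0 \<Longrightarrow> (-1::real)^(m+1) * ((-1)^m * fact m / (\<Prod>i<Suc m. (x + real i))) \<le> 0"
  proof -
    fix x :: real assume "x > 0"
    then have "(\<Prod>i<Suc m. (x + real i)) > 0" by (intro prod_pos) auto
    moreover have "(-1::real)^(m+1) * (-1)^m = -1"
      by (simp add: power_add[symmetric] flip: power_mult) 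
    ultimately show "(-1::real)^(m+1) * ((-1)^m * fact m / (\<Prod>i<Suc m. (x + real i))) \<le> 0"
      by (simp add: mult.assoc[symmetric])
  qed
  then show ?thesis
    using assms d by (intro DERIV_nonpos_imp_nonincreasing[OF assms(2)]) (meson less_le_trans)
qed

lemma dlt_sum: "(dlt^^m) (\<lambda>x. \<Sum>j\<in>J. F j x) x = (\<Sum>j\<in>J. (dlt^^m) (F j) x)"
proof (induction m arbitrary: x)
  case 0 then show ?case by simp
next
  case (Suc m) then show ?case by (simp only: dlt_Suc sum_subtractf)
qed

lemma dlt_diff: "(dlt^^m) (\<lambda>x. f x - g x) x = (dlt^^m) f x - (dlt^^m) g x"
proof (induction m arbitrary: x)
  case 0 then show ?case by simp
next
  case (Suc m) then show ?case by (simp only: dlt_Suc)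
qed

lemma dlt_shift: "(dlt^^m) (\<lambda>x. f (x + c)) x = (dlt^^m) f (x + c)"
proof (induction m arbitrary: x)
  case 0 then show ?case by simp
next
  case (Suc m) then show ?case by (simp only: dlt_Suc) (simp add: algebra_simps)
qed

lemma dlt_const: "(dlt^^Suc m) (\<lambda>x. K + f x) = (dlt^^Suc m) f"
proof -
  have "dlt (\<lambda>x. K + f x) = dlt f" by (rule ext) (simp add: dlt_def)
  then show ?thesis by (simp only: funpow_Suc_right comp_def)
qed

definition BB :: "nat \<Rightarrow> real \<Rightarrow> real" where
  "BB q x = (real q + 1) * ln (real q + 1) - real q * ln (real q)
     + (\<Sum>j<q. ln (x + (real j + 1) / (real q + 1)) - ln (x + (real j + 2) / real q))"

lemma BB_sign:
  assumes "q \<ge> 1" "x \<ge> 0"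
  shows "(-1)^(m+2) * (dlt^^(m+1)) (BB q) x \<ge> 0"
proof -
  have "(dlt^^(m+1)) (BB q) x = (\<Sum>j<q. H (m+1) (x + (real j + 1) / (real q + 1)) - H (m+1) (x + (real j + 2) / real q))"
    unfolding BB_def Suc_eq_plus1[symmetric] dlt_const dlt_sum dlt_diff H_def
    by (simp only: dlt_shift)
  then have "(-1)^(m+2) * (dlt^^(m+1)) (BB q) x =
     (\<Sum>j<q. (-1)^(m+2) * H (m+1) (x + (real j + 1) / (real q + 1)) - (-1)^(m+2) * H (m+1) (x + (real j + 2) / real q))"
    by (simp add: sum_distrib_left algebra_simps)
  also have "\<dots> \<ge> 0"
  proof (rule sum_nonneg)
    fix j assume "j \<in> {..<q}"
    have q0: "real q > 0" using assms by simp
    have a0: "0 < x + (real j + 1) / (real q + 1)" using assms by (simp add: add_nonneg_pos)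
    have "(real j + 1) / (real q + 1) \<le> (real j + 2) / real q"
      using q0 by (simp add: field_simps)
    then have "x + (real j + 1) / (real q + 1) \<le> x + (real j + 2) / real q" by simp
    from S_antimono[OF a0 this, of "m+1"]
    show "0 \<le> (-1)^(m+2) * H (m+1) (x + (real j + 1) / (real q + 1)) - (-1)^(m+2) * H (m+1) (x + (real j + 2) / real q)"
      by (simp add: numeral_2_eq_2)
  qed
  finally show ?thesis .
qed

definition D :: "(nat \<Rightarrow> real) \<Rightarrow> nat \<Rightarrow> real" where
  "D a n = a (Suc n) - a n"

lemma D_Suc: "(D^^Suc m) g n = (D^^m) g (Suc n) - (D^^m) g n"
  by (simp add: D_def)

lemma D_dlt: "(\<And>n. s n = F (real n)) \<Longrightarrow> (D^^k) s n = (dlt^^k) F (real n)"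
proof (induction k arbitrary: n)
  case 0 then show ?case by simp
next
  case (Suc k) then show ?case by (simp only: D_Suc dlt_Suc) (simp add: add.commute)
qed

lemma R_exp: "(R^^r) (\<lambda>n. exp (c n)) = (\<lambda>n. exp ((D^^r) c n))"
proof (induction r)
  case 0 then show ?case by simp
next
  case (Suc r) then show ?case
    by (simp add: ratio_op_def D_def exp_diff)
qed

lemma ln_fact_add: "ln (real (fact (k + m))) = ln (real (fact k)) + (\<Sum>j<m. ln (real (k + j + 1)))"
proof (induction m)
  case 0 then show ?case by simp
next
  case (Suc m)
  have "real (fact (k + Suc m)) = real (k + m + 1) * real (fact (k + m))"
    by (simp add: algebra_simps)
  then have "ln (real (fact (k + Suc m))) = ln (real (k + m + 1)) + ln (real (fact (k + m)))"
    by (simp add: ln_mult del: of_nat_fact of_nat_add)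
  then show ?case using Suc.IH by simp
qed

lemma fc_pos: "fuss_catalan p n > 0"
  unfolding fuss_catalan_def
  by (intro divide_pos_pos mult_pos_pos; rule of_nat_0_less_iff[THEN iffD2]; rule fact_gt_zero)

lemma ln_div3: "(x::real) > 0 \<Longrightarrow> y > 0 \<Longrightarrow> w > 0 \<Longrightarrow> ln (x / (y * w)) = ln x - ln y - ln w"
  by (simp add: ln_div ln_mult)

lemma fc_step:
  assumes "q \<ge> 1"
  shows "ln (fuss_catalan (Suc q) (Suc n)) - ln (fuss_catalan (Suc q) n) = BB q (real n)"
proof -
  define L where "L k = ln (real (fact k))" for k
  have lz: "ln (fuss_catalan (Suc q) m) = L (Suc q * m) - L (q * m + 1) - L m" for m
    unfolding fuss_catalan_def L_def diff_Suc_1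
    by (intro ln_div3; rule of_nat_0_less_iff[THEN iffD2]; rule fact_gt_zero)
  have e1: "L (Suc q * Suc n) = L (Suc q * n) + (\<Sum>j<Suc q. ln (real (Suc q * n + j + 1)))"
    unfolding L_def using ln_fact_add[of "Suc q * n" "Suc q"] by (simp add: algebra_simps)
  have e2: "L (q * Suc n + 1) = L (q * n + 1) + (\<Sum>j<q. ln (real (q * n + 1 + j + 1)))"
    unfolding L_def using ln_fact_add[of "q * n + 1" q] by (simp add: algebra_simps)
  have e3: "L (Suc n) = L n + ln (real n + 1)"
    unfolding L_def using ln_fact_add[of n 1] by simp
  have q0: "real q > 0" using assms by simp
  have t1: "ln (real (Suc q * n + j + 1)) = ln (real q + 1) + ln (real n + (real j + 1) / (real q + 1))" for j
  proof -
    have "real (Suc q * n + j + 1) = (real q + 1) * (real n + (real j + 1) / (real q + 1))"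
      by (simp add: field_simps)
    moreover have "real n + (real j + 1) / (real q + 1) > 0"
      by (intro add_nonneg_pos) auto
    ultimately show ?thesis by (simp only: ln_mult) simp
  qed
  have t1q: "ln (real (Suc q * n + q + 1)) = ln (real q + 1) + ln (real n + 1)"
  proof -
    have "real (Suc q * n + q + 1) = (real q + 1) * (real n + 1)"
      by (simp add: field_simps)
    then show ?thesis by (simp add: ln_mult del: of_nat_add of_nat_mult)
  qed
  have t2: "ln (real (q * n + 1 + j + 1)) = ln (real q) + ln (real n + (real j + 2) / real q)" for j
  proof -
    have "real (q * n + 1 + j + 1) = real q * (real n + (real j + 2) / real q)"
      using q0 by (simp add: field_simps)
    moreover have "real n + (real j + 2) / real q > 0"
      using q0 by (intro add_nonneg_pos) auto
    ultimately show ?thesis using q0 by (simp only: ln_mult) simp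
  qed
  have s1: "(\<Sum>j<Suc q. ln (real (Suc q * n + j + 1))) = real q * ln (real q + 1)
      + (\<Sum>j<q. ln (real n + (real j + 1) / (real q + 1))) + ln (real q + 1) + ln (real n + 1)"
    by (simp only: sum.lessThan_Suc t1 t1q sum.distrib sum_constant card_lessThan) (simp add: algebra_simps)
  have s2: "(\<Sum>j<q. ln (real (q * n + 1 + j + 1))) = real q * ln (real q)
      + (\<Sum>j<q. ln (real n + (real j + 2) / real q))"
    by (simp only: t2 sum.distrib) simp
  show ?thesis
    unfolding lz e1 e2 e3 s1 s2 BB_def sum_subtractf
    by (simp add: algebra_simps)
qed

theorem corollary3p4:
  fixes p :: nat
  assumes "p \<ge> 2"
  shows "infinitely_log_monotonic (fuss_catalan p)"
proof -
  obtain q where pq: "p = Suc q" and q1: "q \<ge> 1" using assms by (cases p) auto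
  define a where "a n = ln (fuss_catalan p n)" for n
  have z: "fuss_catalan p = (\<lambda>n. exp (a n))"
    by (rule ext) (simp add: a_def fc_pos)
  have Da: "\<And>n. D a n = BB q (real n)"
    unfolding D_def a_def pq using fc_step[OF q1] by simp
  have key: "(-1)^(r+2) * ((D^^r) a (Suc (Suc k0)) - 2 * (D^^r) a (Suc k0) + (D^^r) a k0) \<ge> 0" for r k0
  proof -
    have "(D^^Suc (Suc r)) a k0 = (D^^r) a (Suc (Suc k0)) - 2 * (D^^r) a (Suc k0) + (D^^r) a k0"
      by (simp add: D_def)
    moreover have "(D^^Suc (Suc r)) a = (D^^(r+1)) (D a)"
      by (subst funpow_Suc_right) simp
    moreover have "(D^^(r+1)) (D a) k0 = (dlt^^(r+1)) (BB q) (real k0)"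
      by (rule D_dlt[where F="BB q"]) (rule Da)
    ultimately show ?thesis using BB_sign[OF q1, of "real k0" r] by simp
  qed
  show ?thesis
    unfolding infinitely_log_monotonic_def log_monotonic_order_def
  proof (intro allI impI conjI)
    fix k r :: nat
    let ?c = "(D^^r) a"
    have Rr: "(R^^r) (fuss_catalan p) = (\<lambda>n. exp (?c n))" by (simp add: z R_exp)
    have sq: "(exp (?c n))^2 = exp (2 * ?c n)" for n by (simp only: power2_eq_square mult_2 exp_add)
    {
      assume "odd r"
      show "log_concave ((R^^r) (fuss_catalan p))"
        unfolding log_concave_def Rr
      proof (intro allI impI)
        fix n :: nat assume "n \<ge> 1"
        then obtain k0 where n: "n = Suc k0" by (cases n) auto
        have "?c (Suc (Suc k0)) - 2 * ?c (Suc k0) + ?c k0 \<le> 0"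
          using key[of r k0] \<open>odd r\<close> by simp
        then show "exp (?c (n - 1)) * exp (?c (n + 1)) \<le> (exp (?c n))^2"
          unfolding sq n by (simp add: exp_add[symmetric])
      qed
    next
      assume "even r"
      show "log_convex ((R^^r) (fuss_catalan p))"
        unfolding log_convex_def Rr
      proof (intro allI impI)
        fix n :: nat assume "n \<ge> 1"
        then obtain k0 where n: "n = Suc k0" by (cases n) auto
        have "?c (Suc (Suc k0)) - 2 * ?c (Suc k0) + ?c k0 \<ge> 0"
          using key[of r k0] \<open>even r\<close> by simp
        then show "exp (?c (n - 1)) * exp (?c (n + 1)) \<ge> (exp (?c n))^2"
          unfolding sq n by (simp add: exp_add[symmetric])
      qed
    }
  qed
qed

end
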